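(* Let $\mathcal Z$ be an arbitrary set, $\mathcal H\subseteq\{0,1\}^{\mathcal Z}$, and $n\in\mathbb N$ with $n\ge\mathfrak s_0(\mathcal H)$. Let $S=(Z_1,\dots,Z_n)\in\mathcal Z^n$ and for each $h\in\mathcal H$ let $A_h(S)=\{i\in[n]:h(Z_i)=1\}$. Then there exists $I\subseteq[n]$ such that $I\cap A_h(S)\ne\emptyset$ for every $h\in\mathcal H$ with $A_h(S)\ne\emptyset$, and $|I|\le\mathfrak s_0(\mathcal H)$.
   Context: The centered star number $\mathfrak s_0(\mathcal H)$ is the largest $m\in\mathbb N$ such that there exist $z_1,\dots,z_m\in\mathcal Z$ and $h_1,\dots,h_m\in\mathcal H$ with $h_i(z_j)=\mathbf 1\{i=j\}$ for all $i,j\in[m]$, and $\infty$ if no finite maximum exists. *)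

theory Defs
  imports Main "HOL-Library.Extended_Nat"
begin

text \<open>Hypotheses are functions into bool (True = 1, False = 0).
  A centered star set of size m: points z 1..z m and hypotheses h 1..h m in H
  with h i (z j) = (i = j).\<close>

definition centered_star_sizes :: "('z \<Rightarrow> bool) set \<Rightarrow> nat set" where
  "centered_star_sizes H = {m. \<exists>z :: nat \<Rightarrow> 'z. \<exists>h :: nat \<Rightarrow> ('z \<Rightarrow> bool).
      (\<forall>i\<in>{1..m}. h i \<in> H) \<and> (\<forall>i\<in>{1..m}. \<forall>j\<in>{1..m}. h i (z j) = (i = j))}"

definition centered_star_number :: "('z \<Rightarrow> bool) set \<Rightarrow> enat" where
  "centered_star_number H = Sup (enat ` centered_star_sizes H)"

end

theory Submission
  imports Defs
begin

theorem lemma11: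
  fixes H :: "('z \<Rightarrow> bool) set" and n :: nat and Z :: "nat \<Rightarrow> 'z"
  assumes "enat n \<ge> centered_star_number H"
  shows "\<exists>I \<subseteq> {1..n}.
           (\<forall>h\<in>H. {i\<in>{1..n}. h (Z i)} \<noteq> {} \<longrightarrow> I \<inter> {i\<in>{1..n}. h (Z i)} \<noteq> {})
         \<and> enat (card I) \<le> centered_star_number H"
proof -
  define P where "P = (\<lambda>I. I \<subseteq> {1..n} \<and>
     (\<forall>h\<in>H. {i\<in>{1..n}. h (Z i)} \<noteq> {} \<longrightarrow> I \<inter> {i\<in>{1..n}. h (Z i)} \<noteq> {}))"
  have "P {1..n}" unfolding P_def by auto
  from ex_has_least_nat[of P "{1..n}" card, OF this] obtain I where PI: "P I" and minI0: "\<forall>J. P J \<longrightarrow> card I \<le> card J"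
    by blast
  have minI: "\<And>J. P J \<Longrightarrow> card I \<le> card J" using minI0 by simp
  have Isub: "I \<subseteq> {1..n}" using PI unfolding P_def by auto
  have finI: "finite I" using Isub finite_subset by blast
  have wit: "\<exists>g\<in>H. \<forall>j\<in>I. g (Z j) = (j = i)" if iI: "i \<in> I" for i
  proof -
    have "card (I - {i}) < card I" by (rule card_Diff1_less[OF finI iI])
    hence "\<not> P (I - {i})" using minI by fastforce
    then obtain g where gH: "g \<in> H" and ne: "{j\<in>{1..n}. g (Z j)} \<noteq> {}"
       and emp: "(I - {i}) \<inter> {j\<in>{1..n}. g (Z j)} = {}"
      using Isub unfolding P_def by auto
    have "I \<inter> {j\<in>{1..n}. g (Z j)} \<noteq> {}" using PI gH ne unfolding P_def by auto
    then obtain k where k: "k \<in> I" "k \<in> {j\<in>{1..n}. g (Z j)}" by blast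
    have "k = i"
    proof (rule ccontr)
      assume "k \<noteq> i"
      hence "k \<in> (I - {i}) \<inter> {j\<in>{1..n}. g (Z j)}" using k by blast
      thus False using emp by blast
    qed
    hence "g (Z i)" using k by blast
    moreover have "\<forall>j\<in>I. j \<noteq> i \<longrightarrow> \<not> g (Z j)"
    proof (intro ballI impI notI)
      fix j assume "j \<in> I" "j \<noteq> i" "g (Z j)"
      hence "j \<in> (I - {i}) \<inter> {j\<in>{1..n}. g (Z j)}" using Isub by blast
      thus False using emp by blast
    qed
    ultimately have "\<forall>j\<in>I. g (Z j) = (j = i)" by blast
    thus ?thesis using gH by blast
  qed
  hence "\<forall>i\<in>I. \<exists>g. g \<in> H \<and> (\<forall>j\<in>I. g (Z j) = (j = i))" by blast
  from bchoice[OF this] obtain G where G0: "\<forall>i\<in>I. G i \<in> H \<and> (\<forall>j\<in>I. G i (Z j) = (j = i))" ..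
  have G: "\<And>i. i \<in> I \<Longrightarrow> G i \<in> H \<and> (\<forall>j\<in>I. G i (Z j) = (j = i))" using G0 by simp
  obtain e where e: "bij_betw e {1..card I} I" using ex_bij_betw_nat_finite_1[OF finI] by blast
  have "card I \<in> centered_star_sizes H"
    unfolding centered_star_sizes_def
  proof (intro CollectI exI conjI ballI)
    fix i assume "i \<in> {1..card I}"
    thus "(G \<circ> e) i \<in> H" using G bij_betwE[OF e] by simp
  next
    fix i j assume i: "i \<in> {1..card I}" and j: "j \<in> {1..card I}"
    have "e i \<in> I" "e j \<in> I" using i j bij_betwE[OF e] by blast+
    hence "(G \<circ> e) i ((Z \<circ> e) j) = (e j = e i)" using G by auto
    also have "\<dots> = (i = j)" using bij_betw_imp_inj_on[OF e] i j by (auto simp: inj_on_eq_iff)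
    finally show "(G \<circ> e) i ((Z \<circ> e) j) = (i = j)" .
  qed
  hence "enat (card I) \<le> centered_star_number H"
    unfolding centered_star_number_def by (simp add: Sup_upper)
  moreover have "I \<subseteq> {1..n}" "\<forall>h\<in>H. {i\<in>{1..n}. h (Z i)} \<noteq> {} \<longrightarrow> I \<inter> {i\<in>{1..n}. h (Z i)} \<noteq> {}"
    using PI unfolding P_def by simp_all
  ultimately show ?thesis by (intro exI[of _ I]) simp
qed

end
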